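(* Let $n\geq 2$ be an integer and let $A$ be a real square matrix of order $n$ of the form $$A=\begin{pmatrix}1& -a_{12}&\cdots&-a_{1,n-1}&-a_{1n}\\ 0&1& \cdots&-a_{2,n-1}&-a_{2n}\\ \vdots&\vdots&\ddots&\vdots&\vdots\\ 0&0&\cdots&1&-a_{n-1,n}\\ a_1&a_2&\cdots&a_{n-1}&a_n\end{pmatrix},$$ i.e. the first $n-1$ rows form an upper unitriangular block whose entries strictly above the diagonal are $-a_{ij}$ ($1\le i<j\le n$), and the last row is $(a_1,\dots,a_n)$, where $a_{ij}\geq 0$ for all $1\leq i<j\leq n$, $a_i\geq 0$ for all $i=1,\ldots,n-1$, and $a_n>0$. Then $\det(A)>0$. *)

theory Defs
  imports "Jordan_Normal_Form.Determinant"
begin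

text \<open>The matrix of the lemma, with 0-based indices: row i (for i < n-1) has 1 on the
diagonal, -a i j strictly above it and 0 below; the last row (i = n-1) is b 0, ..., b (n-1).\<close>
definition lemma_mat :: "nat \<Rightarrow> (nat \<Rightarrow> nat \<Rightarrow> real) \<Rightarrow> (nat \<Rightarrow> real) \<Rightarrow> real mat" where
  "lemma_mat n a b = mat n n (\<lambda>(i, j).
     if i = n - 1 then b j
     else if i = j then 1
     else if i < j then - a i j
     else 0)"

end

theory Submission
  imports Defs "Jordan_Normal_Form.Gauss_Jordan_Elimination"
begin

lemma base_case: "det (lemma_mat 1 a b) = b 0"
proof -
  have A: "lemma_mat 1 a b \<in> carrier_mat 1 1" unfolding lemma_mat_def by auto
  have "det (lemma_mat 1 a b) = (\<Sum>i<1. lemma_mat 1 a b $$ (i,0) * cofactor (lemma_mat 1 a b) i 0)"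
    by (rule laplace_expansion_column[OF A], simp)
  also have "\<dots> = b 0 * det (mat_delete (lemma_mat 1 a b) 0 0)"
    by (simp add: cofactor_def lemma_mat_def)
  also have "det (mat_delete (lemma_mat 1 a b) 0 0) = 1"
  proof -
    have "mat_delete (lemma_mat 1 a b) 0 0 = 1\<^sub>m 0"
      by (rule eq_matI, auto simp: mat_delete_def lemma_mat_def)
    thus ?thesis by simp
  qed
  finally show ?thesis by simp
qed

lemma step_case:
  assumes k: "k \<ge> 1"
  shows "det (lemma_mat (Suc k) a b) =
    det (lemma_mat k (\<lambda>i j. a (Suc i) (Suc j)) (\<lambda>j. b (Suc j) + b 0 * a 0 (Suc j)))"
proof -
  let ?m = "Suc k"
  let ?A = "lemma_mat ?m a b"
  let ?B = "addrow (- b 0) k 0 ?A"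
  have A: "?A \<in> carrier_mat ?m ?m" unfolding lemma_mat_def by auto
  have B: "?B \<in> carrier_mat ?m ?m" using A by auto
  have "det ?B = det ?A" by (rule det_addrow[OF _ _ A], insert k, auto)
  have "det ?B = (\<Sum>i<?m. ?B $$ (i,0) * cofactor ?B i 0)"
    by (rule laplace_expansion_column[OF B], simp)
  also have "\<dots> = (\<Sum>i\<in>{0}. ?B $$ (i,0) * cofactor ?B i 0)"
  proof (rule sum.mono_neutral_right)
    show "\<forall>i\<in>{..<?m} - {0}. ?B $$ (i,0) * cofactor ?B i 0 = 0"
      using k by (auto simp: lemma_mat_def)
  qed auto
  also have "\<dots> = det (mat_delete ?B 0 0)"
    using k by (simp add: lemma_mat_def cofactor_def)
  also have "mat_delete ?B 0 0 = lemma_mat k (\<lambda>i j. a (Suc i) (Suc j)) (\<lambda>j. b (Suc j) + b 0 * a 0 (Suc j))"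
    by (rule eq_matI, insert k, auto simp: mat_delete_def lemma_mat_def)
  finally show ?thesis using \<open>det ?B = det ?A\<close> by simp
qed

lemma main:
  "m \<ge> 1 \<Longrightarrow> (\<And>i j. i < j \<Longrightarrow> j < m \<Longrightarrow> a i j \<ge> 0) \<Longrightarrow> (\<And>i. i < m - 1 \<Longrightarrow> b i \<ge> 0)
   \<Longrightarrow> b (m - 1) > 0 \<Longrightarrow> det (lemma_mat m a b) > 0"
proof (induction m arbitrary: a b)
  case 0
  then show ?case by simp
next
  case (Suc k)
  show ?case
  proof (cases "k = 0")
    case True
    then show ?thesis using Suc.prems base_case by simp
  next
    case False
    hence k: "k \<ge> 1" by simp
    show ?thesis unfolding step_case[OF k]
    proof (rule Suc.IH[OF k])
      show "0 \<le> a (Suc i) (Suc j)" if "i < j" "j < k" for i j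
        using Suc.prems(2)[of "Suc i" "Suc j"] that by simp
      show "0 \<le> b (Suc i) + b 0 * a 0 (Suc i)" if "i < k - 1" for i
        using Suc.prems(2)[of 0 "Suc i"] Suc.prems(3)[of "Suc i"] Suc.prems(3)[of 0] that k
        by simp
      show "0 < b (Suc (k - 1)) + b 0 * a 0 (Suc (k - 1))"
        using Suc.prems(2)[of 0 k] Suc.prems(4) Suc.prems(3)[of 0] k
        by (simp add: add_pos_nonneg)
    qed
  qed
qed

theorem lemma2p5:
  fixes n :: nat and a :: "nat \<Rightarrow> nat \<Rightarrow> real" and b :: "nat \<Rightarrow> real"
  assumes "n \<ge> 2"
    and "\<And>i j. i < j \<Longrightarrow> j < n \<Longrightarrow> a i j \<ge> 0"
    and "\<And>i. i < n - 1 \<Longrightarrow> b i \<ge> 0"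
    and "b (n - 1) > 0"
  shows "det (lemma_mat n a b) > 0"
  using main[of n a b] assms by simp

end
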